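(* Let $A,B\in\mathcal{B}(\mathcal{H})$ and let $B=X+iY$ be the Cartesian decomposition of $B$. Then $$w^2(AB\pm BA^* )\leq 2\|A\|^2\left(w(X^2)+w(Y^2)+\sqrt{\left(w(X^2)-w(Y^2)\right)^2+w^2(XY+YX)}\right).$$
   Context: $\mathcal{H}$ is a complex Hilbert space and $\mathcal{B}(\mathcal{H})$ is the algebra of bounded linear operators on $\mathcal{H}$. For $T\in\mathcal{B}(\mathcal{H})$, $w(T)=\sup\{|\langle Tx,x\rangle|:x\in\mathcal{H},\|x\|=1\}$ is the numerical radius and $\|T\|$ the operator norm. The Cartesian decomposition $B=X+iY$ means $X=\frac{B+B^*}{2}$ and $Y=\frac{B-B^*}{2i}$, both self-adjoint. *)

theory Defs
  imports "HOL-Analysis.Analysis"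
begin

class complex_hilbert = banach +
  fixes scaleC :: "complex \<Rightarrow> 'a \<Rightarrow> 'a"
  fixes cinner :: "'a \<Rightarrow> 'a \<Rightarrow> complex"
  assumes scaleC_add_right: "scaleC a (x + y) = scaleC a x + scaleC a y"
    and scaleC_add_left: "scaleC (a + b) x = scaleC a x + scaleC b x"
    and scaleC_scaleC: "scaleC a (scaleC b x) = scaleC (a * b) x"
    and scaleC_one: "scaleC 1 x = x"
    and scaleR_scaleC: "scaleR r x = scaleC (complex_of_real r) x"
    and cinner_conj: "cinner x y = cnj (cinner y x)"
    and cinner_add_left: "cinner (x + y) z = cinner x z + cinner y z"
    and cinner_scaleC_left: "cinner (scaleC a x) y = a * cinner x y"
    and cinner_self: "cinner x x = complex_of_real ((norm x)\<^sup>2)"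

definition bounded_clinear :: "('a::complex_hilbert \<Rightarrow> 'a) \<Rightarrow> bool" where
  "bounded_clinear T \<longleftrightarrow> bounded_linear T \<and> (\<forall>a x. T (scaleC a x) = scaleC a (T x))"

definition adj :: "('a::complex_hilbert \<Rightarrow> 'a) \<Rightarrow> ('a \<Rightarrow> 'a)" where
  "adj T = (SOME S. \<forall>x y. cinner (T x) y = cinner x (S y))"

text \<open>Numerical radius (supremum over the closed unit ball; equals the supremum
  over the unit sphere whenever the space is nontrivial, and is 0 otherwise).\<close>
definition numrad :: "('a::complex_hilbert \<Rightarrow> 'a) \<Rightarrow> real" where
  "numrad T = Sup {cmod (cinner (T x) x) | x. norm x \<le> 1}"

end

theory Submission
  imports Defs
begin

lemma scaleC_zero_left[simp]: "scaleC 0 x = 0"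
  by (metis scaleR_scaleC scale_zero_left of_real_0)

lemma scaleC_zero_right[simp]: "scaleC a 0 = 0"
  using scaleC_add_right[of a 0 0] by simp

lemma scaleC_minus_left: "scaleC (- a) x = - scaleC a x"
  using scaleC_add_left[of a "-a" x] by (simp add: minus_unique[symmetric])

lemma scaleC_minus_right: "scaleC a (- x) = - scaleC a x"
  using scaleC_add_right[of a x "-x"] by (simp add: minus_unique[symmetric])

lemma scaleC_diff_right: "scaleC a (x - y) = scaleC a x - scaleC a y"
  using scaleC_add_right[of a x "-y"] by (simp add: scaleC_minus_right)

lemma scaleC_diff_left: "scaleC (a - b) x = scaleC a x - scaleC b x"
  using scaleC_add_left[of a "-b" x] by (simp add: scaleC_minus_left)

lemma cinner_zero_left[simp]: "cinner 0 y = 0"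
  using cinner_add_left[of 0 0 y] by simp

lemma cinner_zero_right[simp]: "cinner y 0 = 0"
  using cinner_conj[of y 0] by simp

lemma cinner_add_right: "cinner x (y + z) = cinner x y + cinner x z"
  by (metis cinner_add_left cinner_conj complex_cnj_add)

lemma cinner_scaleC_right: "cinner x (scaleC a y) = cnj a * cinner x y"
  by (metis cinner_conj cinner_scaleC_left complex_cnj_mult)

lemma cinner_minus_left: "cinner (- x) y = - cinner x y"
  using cinner_add_left[of x "-x" y] by (simp add: minus_unique[symmetric])

lemma cinner_minus_right: "cinner x (- y) = - cinner x y"
  using cinner_add_right[of x y "-y"] by (simp add: minus_unique[symmetric])

lemma cinner_diff_left: "cinner (x - y) z = cinner x z - cinner y z"
  using cinner_add_left[of x "-y" z] by (simp add: cinner_minus_left)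

lemma cinner_diff_right: "cinner x (y - z) = cinner x y - cinner x z"
  using cinner_add_right[of x y "-z"] by (simp add: cinner_minus_right)

lemma cinner_scaleR_left: "cinner (scaleR r x) y = of_real r * cinner x y"
  by (simp add: scaleR_scaleC cinner_scaleC_left)

lemma cinner_scaleR_right: "cinner x (scaleR r y) = of_real r * cinner x y"
  by (simp add: scaleR_scaleC cinner_scaleC_right)

lemmas cinner_simps = cinner_add_left cinner_add_right cinner_diff_left cinner_diff_right
  cinner_scaleC_left cinner_scaleC_right cinner_scaleR_left cinner_scaleR_right
  cinner_minus_left cinner_minus_right

lemma norm_scaleC: "norm (scaleC a x) = cmod a * norm x"
proof -
  have "complex_of_real ((norm (scaleC a x))\<^sup>2) = cinner (scaleC a x) (scaleC a x)"
    by (simp add: cinner_self)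
  also have "\<dots> = a * cnj a * cinner x x" by (simp add: cinner_simps)
  also have "\<dots> = complex_of_real ((cmod a)\<^sup>2) * complex_of_real ((norm x)\<^sup>2)"
    by (simp only: cinner_self complex_norm_square)
  also have "\<dots> = complex_of_real ((cmod a * norm x)\<^sup>2)"
    by (simp add: power_mult_distrib)
  finally have "(norm (scaleC a x))\<^sup>2 = (cmod a * norm x)\<^sup>2" using of_real_eq_iff by blast
  then show ?thesis by (simp add: power2_eq_iff_nonneg)
qed

lemma cinner_self_real: "cinner x x = complex_of_real ((norm x)\<^sup>2)"
  by (rule cinner_self)

lemma cauchy_schwarz: "cmod (cinner x y) \<le> norm x * norm y"
proof (cases "y = 0")
  case True then show ?thesis by simp
next
  case False
  define n where "n = (norm y)\<^sup>2"
  have n: "n > 0" using False by (simp add: n_def)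
  define c where "c = cinner x y"
  define t where "t = c / complex_of_real n"
  have "complex_of_real ((norm (x - scaleC t y))\<^sup>2) = cinner (x - scaleC t y) (x - scaleC t y)"
    by (simp add: cinner_self)
  also have "\<dots> = cinner x x - cnj t * cinner x y - t * cinner y x + t * cnj t * cinner y y"
    by (simp add: cinner_simps algebra_simps)
  also have "\<dots> = complex_of_real ((norm x)\<^sup>2) - c * cnj c / complex_of_real n"
    using n by (simp add: t_def c_def cinner_self n_def[symmetric] field_simps)
      (subst cinner_conj[of y x], simp add: algebra_simps power2_eq_square)
  also have "\<dots> = complex_of_real ((norm x)\<^sup>2 - (cmod c)\<^sup>2 / n)"
    by (metis complex_norm_square of_real_diff of_real_divide)
  finally have "(norm (x - scaleC t y))\<^sup>2 = (norm x)\<^sup>2 - (cmod c)\<^sup>2 / n"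
    using of_real_eq_iff by blast
  then have "(cmod c)\<^sup>2 / n \<le> (norm x)\<^sup>2"
    by (metis diff_ge_0_iff_ge zero_le_power2)
  then have "(cmod c)\<^sup>2 \<le> (norm x * norm y)\<^sup>2"
    using n by (simp add: n_def field_simps power_mult_distrib)
  then show ?thesis unfolding c_def
    by (rule power2_le_imp_le) simp
qed

lemma cnj_mult_self: "cnj z * z = (complex_of_real (cmod z))\<^sup>2"
  by (metis complex_norm_square mult.commute of_real_power)

lemma mult_cnj_self: "z * cnj z = (complex_of_real (cmod z))\<^sup>2"
  by (metis complex_norm_square of_real_power)

lemma riesz:
  fixes f :: "'a::complex_hilbert \<Rightarrow> complex"
  assumes add: "\<And>x y. f (x + y) = f x + f y"
    and sc: "\<And>a x. f (scaleC a x) = a * f x"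
    and bd: "\<And>x. cmod (f x) \<le> C * norm x"
  shows "\<exists>z. \<forall>x. f x = cinner x z"
proof (cases "\<forall>x. f x = 0")
  case True then show ?thesis by (intro exI[of _ 0]) simp
next
  case False
  then obtain x0 where x0: "f x0 \<noteq> 0" by blast
  have f0: "f 0 = 0" using sc[of 0 0] by simp
  have fR: "f (scaleR r x) = of_real r * f x" for r x
    by (simp add: scaleR_scaleC sc)
  have blin: "bounded_linear f"
  proof (rule bounded_linear_intro[where K=C])
    show "f (x + y) = f x + f y" for x y by (rule add)
    show "f (scaleR r x) = scaleR r (f x)" for r x by (simp add: fR scaleR_conv_of_real)
    show "norm (f x) \<le> norm x * C" for x using bd[of x] by (simp add: mult.commute)
  qed
  define S where "S = {Re (f x) | x. norm x \<le> 1}"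
  define N where "N = Sup S"
  have Sne: "S \<noteq> {}" unfolding S_def by (auto intro: exI[of _ 0])
  have Sbdd: "bdd_above S"
  proof -
    have "s \<le> \<bar>C\<bar>" if "s \<in> S" for s
    proof -
      obtain x where x: "s = Re (f x)" "norm x \<le> 1" using \<open>s \<in> S\<close> S_def by auto
      have "s \<le> cmod (f x)" using x complex_Re_le_cmod by simp
      also have "\<dots> \<le> C * norm x" by (rule bd)
      also have "\<dots> \<le> \<bar>C\<bar> * norm x" by (intro mult_right_mono) auto
      also have "\<dots> \<le> \<bar>C\<bar> * 1" using x(2) by (intro mult_left_mono) auto
      finally show ?thesis by simp
    qed
    then show ?thesis by (auto simp: bdd_above_def)
  qed
  have inS: "Re (f x) \<le> N" if "norm x \<le> 1" for x
    unfolding N_def by (rule cSup_upper[OF _ Sbdd]) (use that S_def in auto)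
  have N0: "0 \<le> N" using inS[of 0] f0 by simp
  have fle1: "cmod (f x) \<le> N" if "norm x \<le> 1" for x
  proof (cases "f x = 0")
    case True then show ?thesis using N0 by simp
  next
    case False
    define x' where "x' = scaleC (cnj (f x) / of_real (cmod (f x))) x"
    have nx: "norm x' = norm x" using False by (simp add: x'_def norm_scaleC norm_divide)
    have e: "f x * cnj (f x) = of_real (cmod (f x)) * of_real (cmod (f x))"
      by (metis complex_norm_square of_real_mult power2_eq_square)
    moreover have "f x' = of_real (cmod (f x))"
      using False by (simp add: x'_def sc e power2_eq_square field_simps)
    ultimately show ?thesis using inS[of x'] that nx by simp
  qed
  have fle: "cmod (f x) \<le> N * norm x" for x
  proof (cases "x = 0")
    case True then show ?thesis using f0 by simp
  next
    case False
    have "cmod (f (scaleR (1 / norm x) x)) \<le> N" using False by (intro fle1) simp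
    then have "cmod (f x) / norm x \<le> N" using False by (simp add: fR norm_divide)
    then show ?thesis using False by (simp add: field_simps)
  qed
  have Npos: "0 < N"
  proof -
    have "0 < cmod (f x0)" using x0 by simp
    also have "\<dots> \<le> N * norm x0" by (rule fle)
    finally show ?thesis using N0 by (cases "N = 0") auto
  qed
  have "\<forall>n. \<exists>x. norm x \<le> 1 \<and> N - inverse (real (Suc n)) < Re (f x)"
  proof
    fix n
    have "N - inverse (real (Suc n)) < N" by simp
    then obtain s where "s \<in> S" "N - inverse (real (Suc n)) < s"
      using less_cSup_iff[OF Sne Sbdd] N_def by blast
    then show "\<exists>x. norm x \<le> 1 \<and> N - inverse (real (Suc n)) < Re (f x)" using S_def by auto
  qed
  then obtain xs where xs1: "\<And>n. norm (xs n) \<le> 1"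
    and xs2: "\<And>n. N - inverse (real (Suc n)) < Re (f (xs n))" by metis
  have parallel: "(norm (a + b))\<^sup>2 + (norm (a - b))\<^sup>2 = 2 * (norm a)\<^sup>2 + 2 * (norm b)\<^sup>2"
    for a b :: 'a
  proof -
    have "complex_of_real ((norm (a + b))\<^sup>2 + (norm (a - b))\<^sup>2)
      = cinner (a + b) (a + b) + cinner (a - b) (a - b)" by (simp add: cinner_self)
    also have "\<dots> = 2 * cinner a a + 2 * cinner b b" by (simp add: cinner_simps)
    also have "\<dots> = complex_of_real (2 * (norm a)\<^sup>2 + 2 * (norm b)\<^sup>2)" by (simp add: cinner_self)
    finally show ?thesis using of_real_eq_iff by blast
  qed
  have key: "(norm (xs n - xs m))\<^sup>2 \<le> 4 * (inverse (real (Suc n)) + inverse (real (Suc m))) / N"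
    for n m
  proof -
    define e where "e = inverse (real (Suc n)) + inverse (real (Suc m))"
    have "2 * N - e < Re (f (xs n + xs m))" using xs2[of n] xs2[of m] by (simp add: add e_def)
    also have "\<dots> \<le> cmod (f (xs n + xs m))" by (rule complex_Re_le_cmod)
    also have "\<dots> \<le> N * norm (xs n + xs m)" by (rule fle)
    finally have "2 - e / N < norm (xs n + xs m)" using Npos by (simp add: field_simps)
    then have h: "4 - 4 * (e / N) \<le> (norm (xs n + xs m))\<^sup>2"
    proof (cases "2 - e / N \<le> 0")
      case True
      have "0 \<le> (norm (xs n + xs m))\<^sup>2" by simp
      then show ?thesis using True by linarith
    next
      case False
      assume lt: "2 - e / N < norm (xs n + xs m)"
      have "(2 - e / N)\<^sup>2 \<le> (norm (xs n + xs m))\<^sup>2"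
        using False lt by (intro power_mono) auto
      moreover have "(2 - e / N)\<^sup>2 = 4 - 4 * (e / N) + (e / N)\<^sup>2"
        by (simp add: power2_eq_square algebra_simps)
      moreover have "0 \<le> (e / N)\<^sup>2" by simp
      ultimately show ?thesis by linarith
    qed
    have "(norm (xs n))\<^sup>2 \<le> 1" "(norm (xs m))\<^sup>2 \<le> 1" using xs1 by (simp_all add: power_le_one)
    then have "(norm (xs n - xs m))\<^sup>2 \<le> 4 * (e / N)" using parallel[of "xs n" "xs m"] h by linarith
    then show ?thesis by (simp add: e_def)
  qed
  have "Cauchy xs"
  proof (rule CauchyI)
    fix e :: real assume e: "0 < e"
    obtain M0 where M0: "8 / (N * e\<^sup>2) < real M0"
      using reals_Archimedean2 by blast
    define M where "M = M0"
    have M: "8 / (N * e\<^sup>2) < real (Suc M)" using M0 by (simp add: M_def)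
    have "norm (xs m - xs n) < e" if "m \<ge> M" "n \<ge> M" for m n
    proof -
      have i1: "inverse (real (Suc m)) \<le> inverse (real (Suc M))" using that by (simp add: field_simps)
      have i2: "inverse (real (Suc n)) \<le> inverse (real (Suc M))" using that by (simp add: field_simps)
      have "(norm (xs m - xs n))\<^sup>2 \<le> 4 * (inverse (real (Suc m)) + inverse (real (Suc n))) / N"
        by (rule key)
      also have "\<dots> \<le> 8 * inverse (real (Suc M)) / N"
      proof (rule divide_right_mono)
        show "4 * (inverse (real (Suc m)) + inverse (real (Suc n))) \<le> 8 * inverse (real (Suc M))"
          using i1 i2 unfolding distrib_left by linarith
      qed (use Npos in simp)
      also have "\<dots> < e\<^sup>2"
      proof -
        have p: "0 < N * e\<^sup>2" using Npos e by simp
        have "8 < real (Suc M) * (N * e\<^sup>2)" using M pos_divide_less_eq[OF p] by blast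
        then have h8: "8 < e\<^sup>2 * (N * real (Suc M))" by (simp only: mult_ac)
        have q: "0 < N * real (Suc M)" using Npos by simp
        have "8 * inverse (real (Suc M)) / N = 8 / (N * real (Suc M))" by (simp add: field_simps)
        also have "\<dots> < e\<^sup>2" using h8 pos_divide_less_eq[OF q] by blast
        finally show ?thesis .
      qed
      finally show ?thesis using e by (smt (verit) norm_ge_zero power_mono)
    qed
    then show "\<exists>M. \<forall>m\<ge>M. \<forall>n\<ge>M. norm (xs m - xs n) < e" by blast
  qed
  then obtain u where lim: "xs \<longlonglongrightarrow> u" using Cauchy_convergent_iff convergent_def by blast
  have nu: "norm u \<le> 1"
    using tendsto_norm[OF lim] xs1 by (intro LIMSEQ_le_const2) auto
  have l1: "(\<lambda>n. Re (f (xs n))) \<longlonglongrightarrow> Re (f u)"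
    by (intro tendsto_Re bounded_linear.tendsto[OF blin] lim)
  have l2: "(\<lambda>n. Re (f (xs n))) \<longlonglongrightarrow> N"
  proof (rule tendsto_sandwich[OF _ _ LIMSEQ_inverse_real_of_nat_add_minus[of N] tendsto_const[of N]])
    show "\<forall>\<^sub>F n in sequentially. N + - inverse (real (Suc n)) \<le> Re (f (xs n))"
      using xs2 by (simp add: less_imp_le)
    show "\<forall>\<^sub>F n in sequentially. Re (f (xs n)) \<le> N" using inS xs1 by simp
  qed
  have Ref: "Re (f u) = N" using LIMSEQ_unique[OF l1 l2] .
  have cm: "cmod (f u) \<le> N" using fle1[OF nu] .
  have Imf: "Im (f u) = 0"
  proof -
    have "(cmod (f u))\<^sup>2 = (Re (f u))\<^sup>2 + (Im (f u))\<^sup>2" by (simp add: cmod_power2)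
    moreover have "(cmod (f u))\<^sup>2 \<le> N\<^sup>2" using cm by (simp add: power_mono)
    ultimately show ?thesis using Ref by simp
  qed
  have fu: "f u = of_real N" using Ref Imf by (simp add: complex_eq_iff)
  have nu1: "norm u = 1"
  proof -
    have "N \<le> N * norm u" using fle[of u] fu Npos by simp
    then show ?thesis using nu Npos by (simp add: mult_le_cancel_left1)
  qed
  have uu: "cinner u u = 1" using nu1 by (simp add: cinner_self)
  have orth: "f x = 0" if xu: "cinner x u = 0" for x
  proof (rule ccontr)
    assume fx: "f x \<noteq> 0"
    define c where "c = (cmod (f x))\<^sup>2"
    have c: "c > 0" using fx by (simp add: c_def)
    define eps where "eps = 1 / (N * ((norm x)\<^sup>2 + 1))"
    have np: "0 < (norm x)\<^sup>2 + 1" by (simp add: add_nonneg_pos)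
    have eps: "eps > 0" unfolding eps_def using Npos np by simp
    define t where "t = of_real eps * cnj (f x)"
    define w where "w = u + scaleC t x"
    have ux: "cinner u x = 0" using xu cinner_conj[of u x] by simp
    have "complex_of_real ((norm w)\<^sup>2) = cinner w w" by (simp add: cinner_self)
    also have "\<dots> = cinner u u + cnj t * cinner u x + t * cinner x u + t * cnj t * cinner x x"
      by (simp add: w_def cinner_simps algebra_simps)
    also have "\<dots> = complex_of_real (1 + eps\<^sup>2 * c * (norm x)\<^sup>2)"
    proof -
      have ct: "cmod t = eps * cmod (f x)" using eps by (simp add: t_def norm_mult)
      have tt: "t * cnj t = complex_of_real (eps\<^sup>2 * c)"
        unfolding complex_norm_square[symmetric] ct c_def by (simp add: power_mult_distrib)
      have xx: "cinner x x = complex_of_real ((norm x)\<^sup>2)" by (rule cinner_self)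
      show ?thesis unfolding uu ux xu tt xx by simp
    qed
    finally have nw: "(norm w)\<^sup>2 = 1 + eps\<^sup>2 * c * (norm x)\<^sup>2" using of_real_eq_iff by blast
    have fw: "f w = of_real (N + eps * c)"
      by (simp add: w_def add sc fu t_def c_def cnj_mult_self)
    have "cmod (f w) = N + eps * c" unfolding fw norm_of_real using eps c Npos by simp
    then have "N + eps * c \<le> N * norm w" using fle[of w] by simp
    then have "(N + eps * c)\<^sup>2 \<le> (N * norm w)\<^sup>2" using eps c Npos
      by (intro power_mono) auto
    then have "(N + eps * c)\<^sup>2 \<le> N\<^sup>2 * (1 + eps\<^sup>2 * c * (norm x)\<^sup>2)"
      by (simp add: power_mult_distrib nw)
    then have "2 * N * eps * c + eps\<^sup>2 * c\<^sup>2 \<le> N\<^sup>2 * eps\<^sup>2 * c * (norm x)\<^sup>2"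
      by (simp add: power2_eq_square algebra_simps)
    then have h: "eps * c * (2 * N + eps * c) \<le> eps * c * (N\<^sup>2 * eps * (norm x)\<^sup>2)"
      by (simp add: power2_eq_square algebra_simps)
    have "2 * N + eps * c \<le> N\<^sup>2 * eps * (norm x)\<^sup>2"
      using mult_left_le_imp_le[OF h] eps c by simp
    moreover have "N\<^sup>2 * eps * (norm x)\<^sup>2 < N"
    proof -
      have "N\<^sup>2 * eps * (norm x)\<^sup>2 = N * ((norm x)\<^sup>2 / ((norm x)\<^sup>2 + 1))"
      proof -
        have gen: "\<And>N k a::real. N > 0 \<Longrightarrow> k > 0 \<Longrightarrow> N\<^sup>2 * (1 / (N * k)) * a = N * (a / k)"
          by (simp add: power2_eq_square field_simps)
        show ?thesis unfolding eps_def by (rule gen[OF Npos np])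
      qed
      also have "\<dots> < N * 1" using Npos np by (intro mult_strict_left_mono) auto
      finally show ?thesis by simp
    qed
    ultimately show False using eps c Npos by (smt (verit) mult_pos_pos)
  qed
  have "f x = cinner x (scaleC (of_real N) u)" for x
  proof -
    define x' where "x' = x - scaleC (cinner x u) u"
    have "cinner x' u = 0" by (simp add: x'_def cinner_simps uu)
    then have "f x' = 0" by (rule orth)
    moreover have "x = x' + scaleC (cinner x u) u" by (simp add: x'_def)
    ultimately have "f x = cinner x u * f u" by (metis add sc add_0)
    then show ?thesis by (simp add: fu cinner_simps)
  qed
  then show ?thesis by blast
qed

lemma cs2: "a * d + b * e \<le> sqrt (a\<^sup>2 + b\<^sup>2) * sqrt (d\<^sup>2 + e\<^sup>2)" for a b d e :: real
proof -
  have "(a * d + b * e)\<^sup>2 \<le> (a\<^sup>2 + b\<^sup>2) * (d\<^sup>2 + e\<^sup>2)"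
  proof -
    have "(a\<^sup>2 + b\<^sup>2) * (d\<^sup>2 + e\<^sup>2) - (a * d + b * e)\<^sup>2 = (a * e - b * d)\<^sup>2"
      by (simp add: power2_eq_square algebra_simps)
    moreover have "0 \<le> (a * e - b * d)\<^sup>2" by simp
    ultimately show ?thesis by linarith
  qed
  then have "a * d + b * e \<le> sqrt ((a\<^sup>2 + b\<^sup>2) * (d\<^sup>2 + e\<^sup>2))" by (rule real_le_rsqrt)
  then show ?thesis by (simp add: real_sqrt_mult)
qed

lemma L1: "2 * (u\<^sup>2 * p + v\<^sup>2 * q + u * v * r) \<le> (u\<^sup>2 + v\<^sup>2) * (p + q + sqrt ((p - q)\<^sup>2 + r\<^sup>2))"
  for u v p q r :: real
proof -
  have "(u\<^sup>2 - v\<^sup>2) * (p - q) + (2 * u * v) * r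
     \<le> sqrt ((u\<^sup>2 - v\<^sup>2)\<^sup>2 + (2 * u * v)\<^sup>2) * sqrt ((p - q)\<^sup>2 + r\<^sup>2)" by (rule cs2)
  moreover have "(u\<^sup>2 - v\<^sup>2)\<^sup>2 + (2 * u * v)\<^sup>2 = (u\<^sup>2 + v\<^sup>2)\<^sup>2"
    by (simp add: power2_eq_square algebra_simps)
  moreover have "sqrt ((u\<^sup>2 + v\<^sup>2)\<^sup>2) = u\<^sup>2 + v\<^sup>2" by simp
  ultimately have h: "(u\<^sup>2 - v\<^sup>2) * (p - q) + (2 * u * v) * r \<le> (u\<^sup>2 + v\<^sup>2) * sqrt ((p - q)\<^sup>2 + r\<^sup>2)"
    by simp
  have "2 * (u\<^sup>2 * p + v\<^sup>2 * q + u * v * r) = (u\<^sup>2 + v\<^sup>2) * (p + q) + ((u\<^sup>2 - v\<^sup>2) * (p - q) + (2 * u * v) * r)"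
    by (simp add: algebra_simps)
  with h show ?thesis by (simp add: algebra_simps)
qed

lemma mono1: "p \<le> a \<Longrightarrow> 0 \<le> C \<Longrightarrow> p + sqrt ((p - q)\<^sup>2 + C) \<le> a + sqrt ((a - q)\<^sup>2 + C)"
  for p a q C :: real
proof -
  assume pa: "p \<le> a" and C: "0 \<le> C"
  define S where "S = sqrt ((a - q)\<^sup>2 + C)"
  have S0: "0 \<le> S" using C by (simp add: S_def)
  have S2: "S\<^sup>2 = (a - q)\<^sup>2 + C" using C by (simp add: S_def)
  have Sge: "\<bar>a - q\<bar> \<le> S" unfolding S_def
    by (rule real_le_rsqrt) (use C in simp)
  have "0 \<le> 2 * (a - p) * (S + (a - q))" using pa Sge by (intro mult_nonneg_nonneg) auto
  moreover have "(a - p + S)\<^sup>2 - ((p - q)\<^sup>2 + C) = 2 * (a - p) * (S + (a - q))"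
    using S2 by (simp add: power2_eq_square algebra_simps)
  ultimately have "(p - q)\<^sup>2 + C \<le> (a - p + S)\<^sup>2" by linarith
  then have "sqrt ((p - q)\<^sup>2 + C) \<le> a - p + S" using pa S0 by (intro real_le_lsqrt) auto
  then show ?thesis by (simp add: S_def)
qed

lemma L2:
  fixes p q r a b c :: real
  assumes "p \<le> a" "q \<le> b" "\<bar>r\<bar> \<le> c"
  shows "p + q + sqrt ((p - q)\<^sup>2 + r\<^sup>2) \<le> a + b + sqrt ((a - b)\<^sup>2 + c\<^sup>2)"
proof -
  have "r\<^sup>2 \<le> c\<^sup>2" using assms(3) by (metis abs_ge_zero power2_abs power_mono)
  then have "sqrt ((p - q)\<^sup>2 + r\<^sup>2) \<le> sqrt ((p - q)\<^sup>2 + c\<^sup>2)" by simp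
  also have "p + q + \<dots> \<le> a + q + sqrt ((a - q)\<^sup>2 + c\<^sup>2)"
    using mono1[OF assms(1), of "c\<^sup>2" q] by simp
  also have "\<dots> \<le> a + b + sqrt ((a - b)\<^sup>2 + c\<^sup>2)"
  proof -
    have "q + sqrt ((q - a)\<^sup>2 + c\<^sup>2) \<le> b + sqrt ((b - a)\<^sup>2 + c\<^sup>2)"
      using mono1[OF assms(2), of "c\<^sup>2" a] by simp
    moreover have "(q - a)\<^sup>2 = (a - q)\<^sup>2" "(b - a)\<^sup>2 = (a - b)\<^sup>2" by (simp_all add: power2_commute)
    ultimately show ?thesis by simp
  qed
  finally show ?thesis by simp
qed

lemma parallel: "(norm (a + b))\<^sup>2 + (norm (a - b))\<^sup>2 = 2 * (norm a)\<^sup>2 + 2 * (norm b)\<^sup>2"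
  for a b :: "'a::complex_hilbert"
proof -
  have "complex_of_real ((norm (a + b))\<^sup>2 + (norm (a - b))\<^sup>2)
    = cinner (a + b) (a + b) + cinner (a - b) (a - b)" by (simp add: cinner_self)
  also have "\<dots> = 2 * cinner a a + 2 * cinner b b" by (simp add: cinner_simps)
  also have "\<dots> = complex_of_real (2 * (norm a)\<^sup>2 + 2 * (norm b)\<^sup>2)" by (simp add: cinner_self)
  finally show ?thesis using of_real_eq_iff by blast
qed

lemma adj_prop:
  fixes T :: "'a::complex_hilbert \<Rightarrow> 'a"
  assumes "bounded_clinear T"
  shows "cinner (T x) y = cinner x (adj T y)"
proof -
  have bl: "bounded_linear T" and sc: "\<And>a x. T (scaleC a x) = scaleC a (T x)"
    using assms by (auto simp: bounded_clinear_def)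
  have "\<forall>y. \<exists>z. \<forall>x. cinner (T x) y = cinner x z"
  proof
    fix y
    show "\<exists>z. \<forall>x. cinner (T x) y = cinner x z"
    proof (rule riesz[where C = "onorm T * norm y"])
      show "cinner (T (x + x')) y = cinner (T x) y + cinner (T x') y" for x x'
        by (simp add: linear_add[OF bounded_linear.linear[OF bl]] cinner_add_left)
      show "cinner (T (scaleC a x)) y = a * cinner (T x) y" for a x
        by (simp add: sc cinner_scaleC_left)
      show "cmod (cinner (T x) y) \<le> onorm T * norm y * norm x" for x
      proof -
        have "cmod (cinner (T x) y) \<le> norm (T x) * norm y" by (rule cauchy_schwarz)
        also have "\<dots> \<le> onorm T * norm x * norm y"
          by (intro mult_right_mono onorm[OF bl]) simp
        finally show ?thesis by (simp add: mult_ac)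
      qed
    qed
  qed
  then have "\<exists>S. \<forall>x y. cinner (T x) y = cinner x (S y)" by metis
  then have "\<forall>x y. cinner (T x) y = cinner x (adj T y)"
    unfolding adj_def by (rule someI_ex)
  then show ?thesis by blast
qed

lemma adj_norm:
  fixes T :: "'a::complex_hilbert \<Rightarrow> 'a"
  assumes "bounded_clinear T"
  shows "norm (adj T x) \<le> onorm T * norm x"
proof -
  have bl: "bounded_linear T" using assms by (auto simp: bounded_clinear_def)
  define y where "y = adj T x"
  have "complex_of_real ((norm y)\<^sup>2) = cinner (T y) x"
    by (simp add: adj_prop[OF assms] y_def cinner_self)
  then have "(norm y)\<^sup>2 = cmod (cinner (T y) x)"
    by (metis norm_of_real abs_of_nonneg zero_le_power2)
  also have "\<dots> \<le> norm (T y) * norm x" by (rule cauchy_schwarz)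
  also have "\<dots> \<le> onorm T * norm y * norm x"
    by (intro mult_right_mono onorm[OF bl]) simp
  finally have h: "norm y * norm y \<le> norm y * (onorm T * norm x)"
    by (simp add: power2_eq_square mult_ac)
  show ?thesis
  proof (cases "norm y = 0")
    case True then show ?thesis using onorm_pos_le[OF bl] by (simp add: y_def)
  next
    case False
    then have "norm y > 0" by simp
    with h show ?thesis unfolding y_def[symmetric] by (simp add: mult_le_cancel_left)
  qed
qed

lemma numrad_upper:
  fixes T :: "'a::complex_hilbert \<Rightarrow> 'a"
  assumes "\<And>x. norm x \<le> 1 \<Longrightarrow> cmod (cinner (T x) x) \<le> K" and "norm x \<le> 1"
  shows "cmod (cinner (T x) x) \<le> numrad T"
  unfolding numrad_def
  by (rule cSup_upper) (use assms in \<open>auto simp: bdd_above_def\<close>)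

lemma numrad_least:
  fixes T :: "'a::complex_hilbert \<Rightarrow> 'a"
  assumes "\<And>x. norm x \<le> 1 \<Longrightarrow> cmod (cinner (T x) x) \<le> K"
  shows "numrad T \<le> K"
proof -
  have "cmod (cinner (T 0) 0) \<in> {cmod (cinner (T x) x) | x. norm x \<le> 1}"
    by (rule CollectI, rule exI[where x=0]) simp
  then have ne: "{cmod (cinner (T x) x) | x. norm x \<le> 1} \<noteq> {}" by blast
  show ?thesis unfolding numrad_def
    by (rule cSup_least[OF ne]) (use assms in auto)
qed

lemma sa_real:
  fixes T :: "'a::complex_hilbert \<Rightarrow> 'a"
  assumes "\<And>u v. cinner (T u) v = cinner u (T v)"
  shows "cinner (T u) u = complex_of_real (Re (cinner (T u) u))"
proof -
  have "cinner (T u) u = cnj (cinner (T u) u)"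
    using assms[of u u] cinner_conj[of u "T u"] by simp
  then show ?thesis by (simp add: complex_eq_iff)
qed

theorem theorem2p13:
  fixes A B X Y :: "'a::complex_hilbert \<Rightarrow> 'a"
  assumes "bounded_clinear A" and "bounded_clinear B"
    and "X = (\<lambda>x. scaleC (1/2) (B x + adj B x))"
    and "Y = (\<lambda>x. scaleC (1/(2*\<i>)) (B x - adj B x))"
  shows "(numrad (\<lambda>x. A (B x) + B (adj A x)))\<^sup>2
           \<le> 2 * (onorm A)\<^sup>2 * (numrad (X \<circ> X) + numrad (Y \<circ> Y)
              + sqrt ((numrad (X \<circ> X) - numrad (Y \<circ> Y))\<^sup>2
                      + (numrad (\<lambda>x. X (Y x) + Y (X x)))\<^sup>2))
       \<and> (numrad (\<lambda>x. A (B x) - B (adj A x)))\<^sup>2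
           \<le> 2 * (onorm A)\<^sup>2 * (numrad (X \<circ> X) + numrad (Y \<circ> Y)
              + sqrt ((numrad (X \<circ> X) - numrad (Y \<circ> Y))\<^sup>2
                      + (numrad (\<lambda>x. X (Y x) + Y (X x)))\<^sup>2))"
proof -
  note hA = assms(1) and hB = assms(2) and hX = assms(3) and hY = assms(4)
  have blA: "bounded_linear A" and blB: "bounded_linear B"
    using hA hB by (auto simp: bounded_clinear_def)
  have scB: "\<And>a x. B (scaleC a x) = scaleC a (B x)" using hB by (auto simp: bounded_clinear_def)
  note linB = bounded_linear.linear[OF blB]
  have adjA: "\<And>u v. cinner (A u) v = cinner u (adj A v)" by (rule adj_prop[OF hA])
  have adjB: "\<And>u v. cinner (B u) v = cinner u (adj B v)" by (rule adj_prop[OF hB])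
  have adjB': "\<And>u v. cinner (adj B u) v = cinner u (B v)"
    by (metis adjB cinner_conj)
  define ob where "ob = onorm B"
  define oa where "oa = onorm A"
  have ob0: "0 \<le> ob" unfolding ob_def by (rule onorm_pos_le[OF blB])
  have oa0: "0 \<le> oa" unfolding oa_def by (rule onorm_pos_le[OF blA])
  have Xsa: "\<And>u v. cinner (X u) v = cinner u (X v)"
    unfolding hX by (simp add: cinner_simps adjB adjB' algebra_simps)
  have ci: "cnj (1 / (2 * \<i>)) = - (1 / (2 * \<i>))" by (simp add: complex_eq_iff)
  have Ysa: "\<And>u v. cinner (Y u) v = cinner u (Y v)"
    unfolding hY by (simp add: cinner_simps adjB adjB' ci algebra_simps)
  have decomp: "\<And>z. cinner (B z) z = cinner (X z) z + \<i> * cinner (Y z) z"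
    unfolding hX hY by (simp add: cinner_simps algebra_simps)
  have nBx: "\<And>u. norm (B u) \<le> ob * norm u" unfolding ob_def by (rule onorm[OF blB])
  have nBa: "\<And>u. norm (adj B u) \<le> ob * norm u" unfolding ob_def by (rule adj_norm[OF hB])
  have nX: "\<And>u. norm (X u) \<le> ob * norm u"
  proof -
    fix u
    have "norm (X u) = 1/2 * norm (B u + adj B u)" unfolding hX by (simp add: norm_scaleC)
    also have "\<dots> \<le> 1/2 * (norm (B u) + norm (adj B u))" by (simp add: norm_triangle_ineq)
    also have "\<dots> \<le> ob * norm u" using nBx[of u] nBa[of u] by simp
    finally show "norm (X u) \<le> ob * norm u" .
  qed
  have nY: "\<And>u. norm (Y u) \<le> ob * norm u"
  proof -
    fix u
    have "norm (Y u) = 1/2 * norm (B u - adj B u)" unfolding hY by (simp add: norm_scaleC norm_divide norm_mult)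
    also have "\<dots> \<le> 1/2 * (norm (B u) + norm (adj B u))" by (simp add: norm_triangle_ineq4)
    also have "\<dots> \<le> ob * norm u" using nBx[of u] nBa[of u] by simp
    finally show "norm (Y u) \<le> ob * norm u" .
  qed
  have nX1: "\<And>u. norm u \<le> 1 \<Longrightarrow> norm (X u) \<le> ob"
    using nX ob0 by (meson mult_left_le order_trans)
  have nY1: "\<And>u. norm u \<le> 1 \<Longrightarrow> norm (Y u) \<le> ob"
    using nY ob0 by (meson mult_left_le order_trans)
  have sq: "\<And>(T :: 'a \<Rightarrow> 'a) u. (\<And>u v. cinner (T u) v = cinner u (T v)) \<Longrightarrow> cinner (T (T u)) u = complex_of_real ((norm (T u))\<^sup>2)"
    by (simp add: cinner_self)
  have bXX: "\<And>x. norm x \<le> 1 \<Longrightarrow> cmod (cinner ((X \<circ> X) x) x) \<le> ob\<^sup>2"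
  proof -
    fix x :: 'a assume x: "norm x \<le> 1"
    have "cmod (cinner ((X \<circ> X) x) x) = (norm (X x))\<^sup>2" using sq[of X x, OF Xsa] by (simp add: norm_power)
    also have "\<dots> \<le> ob\<^sup>2" using nX1[OF x] by (simp add: power_mono)
    finally show "cmod (cinner ((X \<circ> X) x) x) \<le> ob\<^sup>2" .
  qed
  have bYY: "\<And>x. norm x \<le> 1 \<Longrightarrow> cmod (cinner ((Y \<circ> Y) x) x) \<le> ob\<^sup>2"
  proof -
    fix x :: 'a assume x: "norm x \<le> 1"
    have "cmod (cinner ((Y \<circ> Y) x) x) = (norm (Y x))\<^sup>2" using sq[of Y x, OF Ysa] by (simp add: norm_power)
    also have "\<dots> \<le> ob\<^sup>2" using nY1[OF x] by (simp add: power_mono)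
    finally show "cmod (cinner ((Y \<circ> Y) x) x) \<le> ob\<^sup>2" .
  qed
  have bXY: "\<And>x. norm x \<le> 1 \<Longrightarrow> cmod (cinner ((\<lambda>x. X (Y x) + Y (X x)) x) x) \<le> 2 * ob\<^sup>2"
  proof -
    fix x :: 'a assume x: "norm x \<le> 1"
    have "cinner ((\<lambda>x. X (Y x) + Y (X x)) x) x = cinner (Y x) (X x) + cinner (X x) (Y x)"
      by (simp add: cinner_add_left Xsa Ysa)
    then have "cmod (cinner ((\<lambda>x. X (Y x) + Y (X x)) x) x)
        \<le> cmod (cinner (Y x) (X x)) + cmod (cinner (X x) (Y x))" by (simp add: norm_triangle_ineq)
    also have "\<dots> \<le> norm (Y x) * norm (X x) + norm (X x) * norm (Y x)"
      by (intro add_mono cauchy_schwarz)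
    also have "\<dots> \<le> ob * ob + ob * ob"
      using nX1[OF x] nY1[OF x] ob0 by (intro add_mono mult_mono) auto
    finally show "cmod (cinner ((\<lambda>x. X (Y x) + Y (X x)) x) x) \<le> 2 * ob\<^sup>2"
      by (simp add: power2_eq_square)
  qed
  define a where "a = numrad (X \<circ> X)"
  define b where "b = numrad (Y \<circ> Y)"
  define c where "c = numrad (\<lambda>x. X (Y x) + Y (X x))"
  define M where "M = a + b + sqrt ((a - b)\<^sup>2 + c\<^sup>2)"
  have pa: "\<And>x. norm x \<le> 1 \<Longrightarrow> cmod (cinner (X (X x)) x) \<le> a"
    using numrad_upper[OF bXX] unfolding a_def comp_def by simp
  have pb: "\<And>x. norm x \<le> 1 \<Longrightarrow> cmod (cinner (Y (Y x)) x) \<le> b"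
    using numrad_upper[OF bYY] unfolding b_def comp_def by simp
  have pc: "\<And>x. norm x \<le> 1 \<Longrightarrow> cmod (cinner (X (Y x) + Y (X x)) x) \<le> c"
    using numrad_upper[OF bXY] unfolding c_def by simp
  have a0: "0 \<le> a" using pa[of 0] by simp
  have b0: "0 \<le> b" using pb[of 0] by simp
  have M0: "0 \<le> M" unfolding M_def using a0 b0 by simp
  have wB: "(cmod (cinner (B z) z))\<^sup>2 \<le> M / 2" if z: "norm z \<le> 1" for z
  proof -
    define u where "u = Re (cinner (X z) z)"
    define v where "v = Re (cinner (Y z) z)"
    have cX: "cinner (X z) z = complex_of_real u" unfolding u_def by (rule sa_real[OF Xsa])
    have cY: "cinner (Y z) z = complex_of_real v" unfolding v_def by (rule sa_real[OF Ysa])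
    have "cinner (B z) z = Complex u v" by (simp add: decomp cX cY complex_eq_iff)
    then have s2: "(cmod (cinner (B z) z))\<^sup>2 = u\<^sup>2 + v\<^sup>2" by (simp add: cmod_power2)
    define s where "s = u\<^sup>2 + v\<^sup>2"
    have s0: "0 \<le> s" by (simp add: s_def)
    define W where "W = scaleR u (X z) + scaleR v (Y z)"
    have "cinner W z = complex_of_real s"
      by (simp add: W_def s_def cinner_simps cX cY power2_eq_square)
    then have "s = Re (cinner W z)" by simp
    also have "\<dots> \<le> cmod (cinner W z)" by (rule complex_Re_le_cmod)
    also have "\<dots> \<le> norm W * norm z" by (rule cauchy_schwarz)
    also have "\<dots> \<le> norm W" using z by (simp add: mult_left_le)
    finally have sW: "s \<le> norm W" .
    define P where "P = cinner (X (X z)) z"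
    define Q where "Q = cinner (Y (Y z)) z"
    define R where "R = cinner (X (Y z) + Y (X z)) z"
    have e1: "cinner (X z) (X z) = P" unfolding P_def by (simp add: Xsa)
    have e2: "cinner (Y z) (Y z) = Q" unfolding Q_def by (simp add: Ysa)
    have e34: "cinner (X z) (Y z) + cinner (Y z) (X z) = R" unfolding R_def
      by (simp add: cinner_add_left Xsa Ysa add.commute)
    have "complex_of_real ((norm W)\<^sup>2) = cinner W W" by (simp add: cinner_self)
    also have "\<dots> = complex_of_real (u * u) * cinner (X z) (X z) + complex_of_real (v * v) * cinner (Y z) (Y z)
        + complex_of_real (u * v) * (cinner (X z) (Y z) + cinner (Y z) (X z))"
      by (simp add: W_def cinner_simps algebra_simps)
    also have "\<dots> = complex_of_real (u * u) * P + complex_of_real (v * v) * Q + complex_of_real (u * v) * R"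
      by (simp only: e1 e2 e34)
    finally have "(norm W)\<^sup>2 = Re (complex_of_real (u * u) * P + complex_of_real (v * v) * Q + complex_of_real (u * v) * R)"
      by (metis Re_complex_of_real)
    then have nW: "(norm W)\<^sup>2 = u\<^sup>2 * Re P + v\<^sup>2 * Re Q + u * v * Re R"
      by (simp add: power2_eq_square)
    have "Re P \<le> a" using pa[OF z] complex_Re_le_cmod[of P] unfolding P_def by linarith
    moreover have "Re Q \<le> b" using pb[OF z] complex_Re_le_cmod[of Q] unfolding Q_def by linarith
    moreover have "\<bar>Re R\<bar> \<le> c" using pc[OF z] abs_Re_le_cmod[of R] unfolding R_def by linarith
    ultimately have L2': "Re P + Re Q + sqrt ((Re P - Re Q)\<^sup>2 + (Re R)\<^sup>2) \<le> M"
      unfolding M_def by (rule L2)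
    have "s\<^sup>2 \<le> (norm W)\<^sup>2" using sW s0 by (simp add: power_mono)
    also have "\<dots> = u\<^sup>2 * Re P + v\<^sup>2 * Re Q + u * v * Re R" by (rule nW)
    also have "\<dots> \<le> s * (Re P + Re Q + sqrt ((Re P - Re Q)\<^sup>2 + (Re R)\<^sup>2)) / 2"
      using L1[of u "Re P" v "Re Q" "Re R"] unfolding s_def by simp
    also have "\<dots> \<le> s * M / 2" using L2' s0 by (simp add: mult_left_mono)
    finally have h: "s * s \<le> s * (M / 2)" by (simp add: power2_eq_square)
    have "s \<le> M / 2"
    proof (cases "s = 0")
      case True then show ?thesis using M0 by simp
    next
      case False then have "0 < s" using s0 by simp
      with h show ?thesis by (simp add: mult_le_cancel_left)
    qed
    then show ?thesis using s2 s_def by simp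
  qed
  define K where "K = sqrt (M / 2)"
  have K0: "0 \<le> K" unfolding K_def using M0 by simp
  have KK: "K\<^sup>2 = M / 2" unfolding K_def using M0 by simp
  have wB1: "cmod (cinner (B z) z) \<le> K" if "norm z \<le> 1" for z
    unfolding K_def by (rule real_le_rsqrt) (rule wB[OF that])
  have wBall: "cmod (cinner (B z) z) \<le> K * (norm z)\<^sup>2" for z
  proof (cases "z = 0")
    case True then show ?thesis by (simp add: linear_0[OF linB])
  next
    case False
    define r where "r = 1 / norm z"
    have r0: "r > 0" using False by (simp add: r_def)
    have "norm (scaleR r z) \<le> 1" using False by (simp add: r_def)
    then have "cmod (cinner (B (scaleR r z)) (scaleR r z)) \<le> K" by (rule wB1)
    moreover have "cinner (B (scaleR r z)) (scaleR r z) = complex_of_real (r * r) * cinner (B z) z"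
      by (simp add: linear_scale[OF linB] cinner_scaleR_left cinner_scaleR_right)
    ultimately have "r * r * cmod (cinner (B z) z) \<le> K"
      using r0 by (simp add: norm_mult)
    then show ?thesis using False by (simp add: r_def power2_eq_square field_simps)
  qed
  have polar: "cmod (cinner (B x) y + cinner (B y) x) \<le> K * ((norm x)\<^sup>2 + (norm y)\<^sup>2)" for x y
  proof -
    have "2 * (cinner (B x) y + cinner (B y) x)
        = cinner (B (x + y)) (x + y) - cinner (B (x - y)) (x - y)"
      by (simp add: linear_add[OF linB] linear_diff[OF linB] cinner_simps algebra_simps)
    then have "2 * cmod (cinner (B x) y + cinner (B y) x)
        = cmod (cinner (B (x + y)) (x + y) - cinner (B (x - y)) (x - y))"
      by (metis norm_mult norm_numeral)
    also have "\<dots> \<le> cmod (cinner (B (x + y)) (x + y)) + cmod (cinner (B (x - y)) (x - y))"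
      by (rule norm_triangle_ineq4)
    also have "\<dots> \<le> K * (norm (x + y))\<^sup>2 + K * (norm (x - y))\<^sup>2"
      by (intro add_mono wBall)
    also have "\<dots> = 2 * (K * ((norm x)\<^sup>2 + (norm y)\<^sup>2))"
      by (simp only: distrib_left[symmetric] parallel)
    finally show ?thesis by simp
  qed
  have amgm: "cmod (cinner (B x) y + cinner (B y) x) \<le> 2 * K * norm x * norm y" for x y
  proof (cases "x = 0 \<or> y = 0")
    case True then show ?thesis by (auto simp: linear_0[OF linB])
  next
    case False
    then have nx: "norm x > 0" and ny: "norm y > 0" by auto
    define l where "l = sqrt (norm y / norm x)"
    have l0: "l > 0" using nx ny by (simp add: l_def)
    have l2: "l\<^sup>2 = norm y / norm x" using nx ny by (simp add: l_def)
    have "cinner (B (scaleR l x)) (scaleR (1 / l) y) + cinner (B (scaleR (1 / l) y)) (scaleR l x)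
        = cinner (B x) y + cinner (B y) x"
      using l0 by (simp add: linear_scale[OF linB] cinner_scaleR_left cinner_scaleR_right)
    then have "cmod (cinner (B x) y + cinner (B y) x)
        \<le> K * ((norm (scaleR l x))\<^sup>2 + (norm (scaleR (1 / l) y))\<^sup>2)"
      using polar[of "scaleR l x" "scaleR (1 / l) y"] by simp
    also have "(norm (scaleR l x))\<^sup>2 = norm x * norm y"
      using l0 l2 nx by (simp add: power_mult_distrib power2_eq_square field_simps)
    also have "(norm (scaleR (1 / l) y))\<^sup>2 = norm x * norm y"
      using l0 l2 nx ny by (simp add: power_mult_distrib power_divide field_simps power2_eq_square)
    finally show ?thesis by (simp add: algebra_simps)
  qed
  have amgm2: "cmod (cinner (B x) y - cinner (B y) x) \<le> 2 * K * norm x * norm y" for x y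
  proof -
    have "cinner (B x) (scaleC \<i> y) + cinner (B (scaleC \<i> y)) x
        = - \<i> * (cinner (B x) y - cinner (B y) x)"
      by (simp add: scB cinner_simps algebra_simps)
    then have "cmod (cinner (B x) y - cinner (B y) x)
        = cmod (cinner (B x) (scaleC \<i> y) + cinner (B (scaleC \<i> y)) x)"
      by (simp add: norm_mult)
    also have "\<dots> \<le> 2 * K * norm x * norm (scaleC \<i> y)" by (rule amgm)
    finally show ?thesis by (simp add: norm_scaleC)
  qed
  have nAa: "norm (adj A x) \<le> oa" if "norm x \<le> 1" for x
  proof -
    have "norm (adj A x) \<le> oa * norm x" unfolding oa_def by (rule adj_norm[OF hA])
    also have "\<dots> \<le> oa" using that oa0 by (simp add: mult_left_le)
    finally show ?thesis .
  qed
  have fin1: "cmod (cinner (A (B x) + B (adj A x)) x) \<le> 2 * K * oa" if x: "norm x \<le> 1" for x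
  proof -
    have "cinner (A (B x) + B (adj A x)) x = cinner (B x) (adj A x) + cinner (B (adj A x)) x"
      by (simp add: cinner_add_left adjA)
    then have "cmod (cinner (A (B x) + B (adj A x)) x) \<le> 2 * K * norm x * norm (adj A x)"
      using amgm by simp
    also have "\<dots> \<le> 2 * K * 1 * oa"
      using x nAa[OF x] K0 by (intro mult_mono) auto
    finally show ?thesis by simp
  qed
  have fin2: "cmod (cinner (A (B x) - B (adj A x)) x) \<le> 2 * K * oa" if x: "norm x \<le> 1" for x
  proof -
    have "cinner (A (B x) - B (adj A x)) x = cinner (B x) (adj A x) - cinner (B (adj A x)) x"
      by (simp add: cinner_diff_left adjA)
    then have "cmod (cinner (A (B x) - B (adj A x)) x) \<le> 2 * K * norm x * norm (adj A x)"
      using amgm2 by simp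
    also have "\<dots> \<le> 2 * K * 1 * oa"
      using x nAa[OF x] K0 by (intro mult_mono) auto
    finally show ?thesis by simp
  qed
  have sqb: "(numrad T)\<^sup>2 \<le> 2 * oa\<^sup>2 * M"
    if hT: "\<And>x. norm x \<le> 1 \<Longrightarrow> cmod (cinner (T x) x) \<le> 2 * K * oa" for T :: "'a \<Rightarrow> 'a"
  proof -
    have "0 \<le> numrad T" using numrad_upper[OF hT, of 0] by simp
    moreover have "numrad T \<le> 2 * K * oa" by (rule numrad_least[OF hT])
    ultimately have "(numrad T)\<^sup>2 \<le> (2 * K * oa)\<^sup>2" by (simp add: power_mono)
    also have "\<dots> = 2 * oa\<^sup>2 * M" using KK by (simp add: power_mult_distrib)
    finally show ?thesis .
  qed
  show ?thesis
    using sqb[OF fin1] sqb[OF fin2]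
    unfolding M_def a_def b_def c_def oa_def by (simp add: mult_ac)
qed

end
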